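(* Let $n\ge2$, $\sigma\in\mathrm{NC}_n$ and $1\le i<n$. Then $\sigma s_i\in\mathrm{NC}_n$ if and only if $i\in\{\sigma(i),\sigma(i+1)\}$.
   Context: $s_i=(i,i+1)$ and $\sigma s_i$ denotes the composition $\sigma\circ s_i$. A set partition of $[n]$ is noncrossing if there are no distinct blocks $P,Q$ with $a,b\in P$, $c,d\in Q$, $a<c<b<d$. To a noncrossing partition associate the permutation $\sigma\in S_n$ which on each block $\{a_1<\dots<a_p\}$ acts by $\sigma(a_j)=a_{j-1}$ ($j\ge2$) and $\sigma(a_1)=a_p$. $\mathrm{NC}_n$ is the set of such permutations (noncrossing permutations); their cycles are the blocks. *)

theory Defs
  imports "HOL-Combinatorics.Transposition" "HOL-Library.Disjoint_Sets"
begin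

definition noncrossing :: "nat set set \<Rightarrow> bool" where
  "noncrossing P \<longleftrightarrow>
     (\<forall>B\<in>P. \<forall>C\<in>P. B \<noteq> C \<longrightarrow>
        \<not> (\<exists>a b c d. a \<in> B \<and> b \<in> B \<and> c \<in> C \<and> d \<in> C \<and> a < c \<and> c < b \<and> b < d))"

definition nc_partition :: "nat \<Rightarrow> nat set set \<Rightarrow> bool" where
  "nc_partition n P \<longleftrightarrow> partition_on {1..n} P \<and> noncrossing P"

definition part_perm :: "nat \<Rightarrow> nat set set \<Rightarrow> nat \<Rightarrow> nat" where
  "part_perm n P x =
     (if x \<in> {1..n} then
        (let B = (THE B. B \<in> P \<and> x \<in> B) in
           if x = Min B then Max B else Max {y \<in> B. y < x})
      else x)"

definition NC :: "nat \<Rightarrow> (nat \<Rightarrow> nat) set" where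
  "NC n = {part_perm n P | P. nc_partition n P}"

definition s :: "nat \<Rightarrow> nat \<Rightarrow> nat" where
  "s i = transpose i (i + 1)"

end

theory Submission
  imports Defs
begin

lemma part_def': "partition_on A P \<longleftrightarrow> \<Union>P = A \<and> (\<forall>B\<in>P. \<forall>C\<in>P. B \<noteq> C \<longrightarrow> B \<inter> C = {}) \<and> {} \<notin> P"
  by (auto simp: partition_on_def disjoint_def)

lemma the_block:
  assumes "partition_on A P" "B \<in> P" "x \<in> B"
  shows "(THE B. B \<in> P \<and> x \<in> B) = B"
  using assms unfolding part_def' by (intro the_equality) blast+

lemma block_fin:
  assumes "partition_on {1..(n::nat)} P" "B \<in> P"
  shows "finite B" "B \<subseteq> {1..n}" "B \<noteq> {}"
proof -
  show "B \<subseteq> {1..n}" using assms unfolding part_def' by blast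
  then show "finite B" by (rule finite_subset) simp
  show "B \<noteq> {}" using assms unfolding part_def' by auto
qed

lemma pp_val:
  assumes "partition_on {1..(n::nat)} P" "B \<in> P" "x \<in> B"
  shows "part_perm n P x = (if x = Min B then Max B else Max {y\<in>B. y < x})"
proof -
  have "x \<in> {1..n}" using block_fin[OF assms(1,2)] assms(3) by auto
  then show ?thesis unfolding part_perm_def using the_block[OF assms] by (simp add: Let_def)
qed

lemma pp_out: "x \<notin> {1..n} \<Longrightarrow> part_perm n P x = x"
  unfolding part_perm_def by (simp only: if_False)

lemma pp_in:
  assumes "partition_on {1..(n::nat)} P" "B \<in> P" "x \<in> B"
  shows "part_perm n P x \<in> B"
proof -
  have f: "finite B" "B \<noteq> {}" using block_fin[OF assms(1,2)] by auto
  show ?thesis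
  proof (cases "x = Min B")
    case True then show ?thesis using pp_val[OF assms] f by simp
  next
    case False
    have "Min B \<le> x" using f assms(3) by simp
    then have "Min B < x" using False by simp
    then have "Min B \<in> {y\<in>B. y < x}" using f by simp
    then have ne: "{y\<in>B. y < x} \<noteq> {}" by blast
    have "Max {y\<in>B. y < x} \<in> {y\<in>B. y < x}" using f ne by (intro Max_in) simp_all
    then show ?thesis using pp_val[OF assms] False by simp
  qed
qed

lemma pp_pred:
  assumes "partition_on {1..(n::nat)} P" "B \<in> P" "i \<in> B" "i + 1 \<in> B"
  shows "part_perm n P (i+1) = i"
proof -
  have f: "finite B" "B \<noteq> {}" using block_fin[OF assms(1,2)] by auto
  have "Min B \<le> i" using f assms(3) by simp
  then have ne: "i + 1 \<noteq> Min B" by simp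
  have "Max {y\<in>B. y < i+1} = i" using f assms(3) by (intro Max_eqI) auto
  then show ?thesis using pp_val[OF assms(1,2,4)] ne by simp
qed

lemma pp_fix:
  assumes "partition_on {1..(n::nat)} P" "B \<in> P" "x \<in> B" "part_perm n P x = x"
  shows "B = {x}"
proof -
  have f: "finite B" "B \<noteq> {}" using block_fin[OF assms(1,2)] by auto
  show ?thesis
  proof (cases "x = Min B")
    case True
    then have "Max B = Min B" using pp_val[OF assms(1-3)] assms(4) by simp
    then show ?thesis using f True
      by (metis Max_ge Min_le assms(3) antisym singleton_iff subsetI subset_antisym empty_subsetI insert_subset)
  next
    case False
    have "Min B \<le> x" using f assms(3) by simp
    then have "Min B < x" using False by simp
    then have "Min B \<in> {y\<in>B. y < x}" using f by simp
    then have ne: "{y\<in>B. y < x} \<noteq> {}" by blast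
    have "Max {y\<in>B. y < x} \<in> {y\<in>B. y < x}" using f ne by (intro Max_in) simp_all
    then show ?thesis using pp_val[OF assms(1-3)] False assms(4) by simp
  qed
qed

lemma pp_lt:
  assumes "partition_on {1..(n::nat)} P" "B \<in> P" "x \<in> B" "x \<noteq> Min B"
  shows "part_perm n P x = Max {y\<in>B. y < x}" "part_perm n P x < x"
    "\<And>z. z \<in> B \<Longrightarrow> z < x \<Longrightarrow> z \<le> part_perm n P x"
proof -
  have f: "finite B" "B \<noteq> {}" using block_fin[OF assms(1,2)] by auto
  show e: "part_perm n P x = Max {y\<in>B. y < x}" using pp_val[OF assms(1-3)] assms(4) by simp
  have "Min B \<le> x" using f assms(3) by simp
  then have "Min B < x" using assms(4) by simp
  then have "Min B \<in> {y\<in>B. y < x}" using f by simp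
  then have ne: "{y\<in>B. y < x} \<noteq> {}" by blast
  have "Max {y\<in>B. y < x} \<in> {y\<in>B. y < x}" using f ne by (intro Max_in) simp_all
  then show "part_perm n P x < x" using e by simp
  fix z assume "z \<in> B" "z < x"
  then have "z \<in> {y\<in>B. y < x}" by simp
  then show "z \<le> part_perm n P x" unfolding e using f by (intro Max_ge) simp_all
qed

lemma pp_closure:
  assumes part: "partition_on {1..(n::nat)} P" and B: "B \<in> P" and x0: "x0 \<in> B" "x0 \<in> S"
    and y: "y \<in> B"
    and step: "\<And>x. x \<in> S \<Longrightarrow> x \<in> B \<Longrightarrow> x \<noteq> y \<Longrightarrow> part_perm n P x \<in> S"
  shows "y \<in> S"
proof (rule ccontr)
  assume yS: "y \<notin> S"
  have f: "finite B" "B \<noteq> {}" using block_fin[OF part B] by auto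
  have st: "part_perm n P x \<in> S \<inter> B" if "x \<in> S \<inter> B" for x
    using step[of x] that yS pp_in[OF part B, of x] by auto
  define m where "m = Min (S \<inter> B)"
  have fin: "finite (S \<inter> B)" using f by simp
  have mS: "m \<in> S \<inter> B" unfolding m_def using fin x0 by (intro Min_in) auto
  have mB: "Min B \<in> S"
  proof (rule ccontr)
    assume "Min B \<notin> S"
    then have "m \<noteq> Min B" using mS by auto
    then have "part_perm n P m < m" using pp_lt[OF part B, of m] mS by auto
    moreover have "m \<le> part_perm n P m" unfolding m_def using fin st[OF mS] m_def by simp
    ultimately show False by simp
  qed
  have MinB: "Min B \<in> B" using f by simp
  have "Min B \<noteq> y" using mB yS by auto
  have MaxS: "Max B \<in> S" using st[of "Min B"] mB MinB pp_val[OF part B MinB] by auto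
  have "y \<le> Max B" using f y by simp
  moreover have "Max B \<noteq> y" using MaxS yS by auto
  ultimately have yM: "y < Max B" by simp
  define T where "T = {x \<in> S \<inter> B. y < x}"
  have finT: "finite T" unfolding T_def using fin by (rule finite_subset[rotated]) blast
  have MT: "Max B \<in> T" unfolding T_def using yM MaxS f by simp
  define m' where "m' = Min T"
  have m'T: "m' \<in> T" unfolding m'_def using finT MT by (intro Min_in) auto
  have "Min B \<le> y" using f y by simp
  then have "m' \<noteq> Min B" using m'T unfolding T_def by auto
  then have lt: "part_perm n P m' < m'" and ge: "y \<le> part_perm n P m'"
    using pp_lt[OF part B, of m'] m'T y unfolding T_def by auto
  have "part_perm n P m' \<in> S \<inter> B" using st m'T unfolding T_def by auto
  moreover then have "part_perm n P m' \<noteq> y" using yS by auto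
  ultimately have "part_perm n P m' \<in> T" using ge unfolding T_def by auto
  then have "m' \<le> part_perm n P m'" unfolding m'_def using finT by simp
  then show False using lt by simp
qed

lemma merge_part:
  assumes P: "partition_on {1..(n::nat)} P" and Si: "{i} \<in> P" and C: "C \<in> P" "i+1 \<in> C"
  shows "partition_on {1..n} (insert (insert i C) (P - {{i}, C}))"
proof -
  have disj: "\<And>X Y. X \<in> P \<Longrightarrow> Y \<in> P \<Longrightarrow> X \<noteq> Y \<Longrightarrow> X \<inter> Y = {}" using P unfolding part_def' by blast
  have U: "\<Union>P = {1..n}" using P unfolding part_def' by blast
  have e: "{} \<notin> P" using P unfolding part_def' by blast
  have "\<Union>(insert (insert i C) (P - {{i}, C})) = \<Union>P"
  proof
    show "\<Union>(insert (insert i C) (P - {{i}, C})) \<subseteq> \<Union>P" using Si C(1) by blast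
    show "\<Union>P \<subseteq> \<Union>(insert (insert i C) (P - {{i}, C}))"
    proof
      fix x assume "x \<in> \<Union>P"
      then obtain X where "X \<in> P" "x \<in> X" by blast
      then show "x \<in> \<Union>(insert (insert i C) (P - {{i}, C}))"
        by (cases "X = {i} \<or> X = C") auto
    qed
  qed
  moreover have "\<forall>X\<in>insert (insert i C) (P - {{i}, C}). \<forall>Y\<in>insert (insert i C) (P - {{i}, C}). X \<noteq> Y \<longrightarrow> X \<inter> Y = {}"
  proof (intro ballI impI)
    fix X Y assume X: "X \<in> insert (insert i C) (P - {{i}, C})" and Y: "Y \<in> insert (insert i C) (P - {{i}, C})" and ne: "X \<noteq> Y"
    have a: "E \<inter> insert i C = {}" if "E \<in> P - {{i}, C}" for E
    proof -
      have "E \<inter> C = {}" using disj[of E C] that C by blast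
      moreover have "E \<inter> {i} = {}" using disj[of E "{i}"] that Si by blast
      ultimately show ?thesis by blast
    qed
    show "X \<inter> Y = {}"
    proof (cases "X = insert i C")
      case True
      then have "Y \<in> P - {{i}, C}" using Y ne by blast
      then show ?thesis using a True by blast
    next
      case False
      then have X': "X \<in> P - {{i}, C}" using X by blast
      show ?thesis
      proof (cases "Y = insert i C")
        case True then show ?thesis using a[OF X'] by blast
      next
        case False
        then have "Y \<in> P" using Y by blast
        then show ?thesis using disj[of X Y] X' ne by blast
      qed
    qed
  qed
  moreover have "{} \<notin> insert (insert i C) (P - {{i}, C})" using e C by blast
  ultimately show ?thesis unfolding part_def' using U by (intro conjI) simp_all
qed

lemma merge_nc:
  assumes P: "partition_on {1..(n::nat)} P" and ncP: "noncrossing P" and Si: "{i} \<in> P" and C: "C \<in> P" "i+1 \<in> C"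
  shows "noncrossing (insert (insert i C) (P - {{i}, C}))"
proof -
  define Q where "Q = insert (insert i C) (P - {{i}, C})"
  define g where "g x = (if x = i then i+1 else x)" for x
  define h where "h X = (if X = insert i C then C else X)" for X
  have QP: "partition_on {1..n} Q" unfolding Q_def using merge_part[OF P Si C] .
  have disj: "\<And>X Y. X \<in> P \<Longrightarrow> Y \<in> P \<Longrightarrow> X \<noteq> Y \<Longrightarrow> X \<inter> Y = {}" using P unfolding part_def' by blast
  have "{i} \<noteq> C" using C by auto
  then have iC: "i \<notin> C" using disj[OF Si C(1)] by auto
  have disjQ: "\<And>X Y. X \<in> Q \<Longrightarrow> Y \<in> Q \<Longrightarrow> X \<noteq> Y \<Longrightarrow> X \<inter> Y = {}" using QP unfolding part_def' by blast
  have MQ: "insert i C \<in> Q" unfolding Q_def by simp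
  have XQ: "X = insert i C \<or> (X \<noteq> insert i C \<and> X \<in> P \<and> X \<noteq> {i} \<and> X \<noteq> C)" if "X \<in> Q" for X
    using that unfolding Q_def by blast
  have hP: "h X \<in> P" if "X \<in> Q" for X
    using XQ[OF that] C(1) unfolding h_def by (cases "X = insert i C") simp_all
  have hg: "g x \<in> h X" if "X \<in> Q" "x \<in> X" for X x
  proof (cases "X = insert i C")
    case True
    then have hX: "h X = C" unfolding h_def by simp
    show ?thesis
    proof (cases "x = i")
      case True then show ?thesis using hX C(2) unfolding g_def by simp
    next
      case False then show ?thesis using hX that(2) \<open>X = insert i C\<close> unfolding g_def by simp
    qed
  next
    case False
    then have X: "X \<in> P" "X \<noteq> {i}" using XQ[OF that(1)] by blast+
    then have "X \<inter> {i} = {}" using disj[of X "{i}"] Si by blast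
    then have "x \<noteq> i" using that(2) by blast
    then show ?thesis using that(2) False unfolding g_def h_def by simp
  qed
  have hne: "h X \<noteq> h Y" if "X \<in> Q" "Y \<in> Q" "X \<noteq> Y" for X Y
    using XQ[OF that(1)] XQ[OF that(2)] that(3) unfolding h_def by (cases "X = insert i C"; cases "Y = insert i C") auto
  have mono: "g u < g v" if "u < v" "X \<in> Q" "Y \<in> Q" "X \<noteq> Y" "u \<in> X" "v \<in> Y" for u v X Y
  proof -
    have "\<not> (u \<in> insert i C \<and> v \<in> insert i C)"
    proof
      assume uv: "u \<in> insert i C \<and> v \<in> insert i C"
      have "X = insert i C"
      proof (rule ccontr)
        assume "X \<noteq> insert i C"
        then show False using disjQ[OF that(2) MQ] uv that(5) by blast
      qed
      moreover have "Y = insert i C"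
      proof (rule ccontr)
        assume "Y \<noteq> insert i C"
        then show False using disjQ[OF that(3) MQ] uv that(6) by blast
      qed
      ultimately show False using that(4) by simp
    qed
    then have "\<not> (u \<in> {i, i+1} \<and> v \<in> {i, i+1})" using C by auto
    then show ?thesis using that(1) unfolding g_def by (cases "u = i"; cases "v = i") simp_all
  qed
  show ?thesis unfolding noncrossing_def Q_def[symmetric]
  proof (intro ballI impI notI)
    fix X Y assume X: "X \<in> Q" and Y: "Y \<in> Q" and ne: "X \<noteq> Y"
    assume "\<exists>a b c d. a \<in> X \<and> b \<in> X \<and> c \<in> Y \<and> d \<in> Y \<and> a < c \<and> c < b \<and> b < d"
    then obtain a b c d where abcd: "a \<in> X" "b \<in> X" "c \<in> Y" "d \<in> Y" "a < c" "c < b" "b < d" by blast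
    have "g a < g c" using mono[OF abcd(5) X Y ne abcd(1,3)] .
    moreover have "g c < g b" using mono[OF abcd(6) Y X ne[symmetric] abcd(3,2)] .
    moreover have "g b < g d" using mono[OF abcd(7) X Y ne abcd(2,4)] .
    moreover have "\<not> (\<exists>a b c d. a \<in> h X \<and> b \<in> h X \<and> c \<in> h Y \<and> d \<in> h Y \<and> a < c \<and> c < b \<and> b < d)"
      using ncP[unfolded noncrossing_def, THEN bspec, OF hP[OF X], THEN bspec, OF hP[OF Y], THEN mp, OF hne[OF X Y ne]] .
    ultimately show False using hg[OF X abcd(1)] hg[OF X abcd(2)]
      hg[OF Y abcd(3)] hg[OF Y abcd(4)] by (meson)
  qed
qed

lemma merge_pp:
  assumes P: "partition_on {1..(n::nat)} P" and Si: "{i} \<in> P" and C: "C \<in> P" "i+1 \<in> C"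
    and i: "1 \<le> i" "i < n"
  shows "part_perm n (insert (insert i C) (P - {{i}, C})) = part_perm n P \<circ> s i"
proof
  fix x
  define Q where "Q = insert (insert i C) (P - {{i}, C})"
  define M where "M = insert i C"
  have QP: "partition_on {1..n} Q" unfolding Q_def using merge_part[OF P Si C] .
  have disj: "\<And>X Y. X \<in> P \<Longrightarrow> Y \<in> P \<Longrightarrow> X \<noteq> Y \<Longrightarrow> X \<inter> Y = {}" using P unfolding part_def' by blast
  have "{i} \<noteq> C" using C by auto
  then have iC: "i \<notin> C" using disj[OF Si C(1)] by auto
  have MQ: "M \<in> Q" unfolding Q_def M_def by simp
  have fC: "finite C" "C \<noteq> {}" using block_fin[OF P C(1)] by auto
  have fM: "finite M" "M \<noteq> {}" using fC unfolding M_def by auto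
  have "i + 1 \<le> Max C" using fC C(2) by simp
  then have MaxM: "Max M = Max C" unfolding M_def using fC by (simp add: max_def)
  have MinM: "Min M = min i (Min C)" unfolding M_def using fC by simp
  have U: "\<Union>P = {1..n}" using P unfolding part_def' by blast
  have si: "s i i = i + 1" "s i (i+1) = i" "\<And>y. y \<noteq> i \<Longrightarrow> y \<noteq> i + 1 \<Longrightarrow> s i y = y"
    unfolding s_def by simp_all
  have sigi: "part_perm n P i = i" using pp_val[OF P Si] by simp
  show "part_perm n Q x = (part_perm n P \<circ> s i) x"
  proof (cases "x \<in> {1..n}")
    case False
    then have "x \<noteq> i" "x \<noteq> i+1" using i by auto
    then show ?thesis using False pp_out[OF False] si(3) by simp
  next
    case True
    then obtain X where X: "X \<in> P" "x \<in> X" using U by blast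
    show ?thesis
    proof (cases "X = {i} \<or> X = C")
      case False
      then have XQ: "X \<in> Q" unfolding Q_def using X by blast
      have "X \<inter> {i} = {}" "X \<inter> C = {}" using disj[of X "{i}"] disj[of X C] X False Si C by auto
      then have "x \<noteq> i" "x \<noteq> i+1" using X C by auto
      then show ?thesis using pp_val[OF QP XQ X(2)] pp_val[OF P X] si(3) by simp
    next
      case True
      then have xM: "x \<in> M" using X unfolding M_def by auto
      have ppQ: "part_perm n Q x = (if x = Min M then Max M else Max {y\<in>M. y < x})"
        using pp_val[OF QP MQ xM] .
      consider "x = i" | "x = i + 1" | "x \<noteq> i" "x \<noteq> i+1" "x \<in> C" using xM unfolding M_def by auto
      then show ?thesis
      proof cases
        case 1
        have r: "(part_perm n P \<circ> s i) x = part_perm n P (i+1)" using 1 si by simp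
        show ?thesis
        proof (cases "Min C = i + 1")
          case True
          then have "Min M = i" using MinM by simp
          then show ?thesis using ppQ 1 r pp_val[OF P C] True MaxM by simp
        next
          case False
          have "Min C \<le> i + 1" using fC C(2) by simp
          moreover have "Min C \<in> C" using fC by simp
          then have "Min C \<noteq> i" using iC by auto
          ultimately have "Min C < i" using False by simp
          then have mm: "Min M \<noteq> i" using MinM by simp
          have "{y\<in>M. y < i} = {y\<in>C. y < i + 1}" unfolding M_def using iC less_Suc_eq by auto
          then show ?thesis using ppQ 1 r pp_val[OF P C] False mm by simp
        qed
      next
        case 2
        have r: "(part_perm n P \<circ> s i) x = i" using 2 si sigi by simp
        have "Min M \<le> i" using MinM by simp
        then have "x \<noteq> Min M" using 2 by simp
        moreover have "Max {y\<in>M. y < x} = i" using 2 fM unfolding M_def by (intro Max_eqI) auto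
        ultimately show ?thesis using ppQ r by simp
      next
        case 3
        have r: "(part_perm n P \<circ> s i) x = part_perm n P x" using 3 si by simp
        have ppP: "part_perm n P x = (if x = Min C then Max C else Max {y\<in>C. y < x})"
          using pp_val[OF P C(1) 3(3)] .
        have mC: "Min C \<le> x" "Min C \<le> i + 1" using fC 3(3) C(2) by simp_all
        have eq: "x = Min M \<longleftrightarrow> x = Min C"
        proof
          assume "x = Min M" then show "x = Min C" using MinM 3 by (simp add: min_def split: if_splits)
        next
          assume a: "x = Min C"
          then have "x < i" using mC 3 by simp
          then show "x = Min M" using MinM a by simp
        qed
        show ?thesis
        proof (cases "x = Min C")
          case True then show ?thesis using ppQ ppP eq r MaxM by simp
        next
          case False
          have "Max {y\<in>M. y < x} = Max {y\<in>C. y < x}"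
          proof (cases "x < i")
            case True
            then have "{y\<in>M. y < x} = {y\<in>C. y < x}" unfolding M_def by auto
            then show ?thesis by simp
          next
            case False
            then have xg: "i + 1 < x" using 3 by simp
            then have e: "{y\<in>M. y < x} = insert i {y\<in>C. y < x}" unfolding M_def by auto
            have f: "finite {y\<in>C. y < x}" "{y\<in>C. y < x} \<noteq> {}" using fC C(2) xg by auto
            have "i + 1 \<le> Max {y\<in>C. y < x}" using f C(2) xg by (intro Max_ge) auto
            then show ?thesis unfolding e using f by (simp add: max_def)
          qed
          then show ?thesis using ppQ ppP eq r False by simp
        qed
      qed
    qed
  qed
qed

lemma split_part:
  assumes P: "partition_on {1..(n::nat)} P" and ncP: "noncrossing P" and B: "B \<in> P" "i \<in> B" "i + 1 \<in> B"
  shows "nc_partition n (insert (B - {i}) (insert {i} (P - {B})))"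
    "insert (insert i (B - {i})) ((insert (B - {i}) (insert {i} (P - {B}))) - {{i}, B - {i}}) = P"
proof -
  define Q where "Q = insert (B - {i}) (insert {i} (P - {B}))"
  have disj: "\<And>X Y. X \<in> P \<Longrightarrow> Y \<in> P \<Longrightarrow> X \<noteq> Y \<Longrightarrow> X \<inter> Y = {}" using P unfolding part_def' by blast
  have U: "\<Union>P = {1..n}" using P unfolding part_def' by blast
  have e: "{} \<notin> P" using P unfolding part_def' by blast
  have dB: "E \<inter> B = {}" if "E \<in> P - {B}" for E using disj[of E B] that B by blast
  have n1: "{i} \<notin> P - {B}"
  proof
    assume "{i} \<in> P - {B}"
    then have "{i} \<inter> B = {}" by (rule dB)
    then show False using B(2) by blast
  qed
  have n2: "B - {i} \<notin> P - {B}"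
  proof
    assume "B - {i} \<in> P - {B}"
    then have "(B - {i}) \<inter> B = {}" by (rule dB)
    moreover have "i + 1 \<in> (B - {i}) \<inter> B" using B(3) by simp
    ultimately show False by simp
  qed
  have QQ: "X = B - {i} \<or> X = {i} \<or> (X \<in> P \<and> X \<noteq> B)" if "X \<in> Q" for X
    using that unfolding Q_def by blast
  have QB: "X \<subseteq> B \<or> (X \<in> P \<and> X \<noteq> B)" if "X \<in> Q" for X
  proof -
    from QQ[OF that] show ?thesis
    proof (elim disjE)
      assume "X = B - {i}" then show ?thesis by blast
    next
      assume "X = {i}" then show ?thesis using B(2) by blast
    next
      assume "X \<in> P \<and> X \<noteq> B" then show ?thesis by blast
    qed
  qed
  have nsub: "\<not> X \<subseteq> B" if "X \<in> P" "X \<noteq> B" for X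
  proof
    assume "X \<subseteq> B"
    moreover have "X \<inter> B = {}" using dB that by blast
    ultimately have "X = {}" by blast
    then show False using e that(1) by simp
  qed
  have BQ: "B - {i} \<in> Q" "{i} \<in> Q" unfolding Q_def by simp_all
  have PQ: "X \<in> Q" if "X \<in> P" "X \<noteq> B" for X unfolding Q_def using that by simp
  have "\<Union>Q = \<Union>P"
  proof
    show "\<Union>Q \<subseteq> \<Union>P"
    proof
      fix x assume "x \<in> \<Union>Q"
      then obtain X where X: "X \<in> Q" "x \<in> X" by (rule UnionE)
      from QB[OF X(1)] show "x \<in> \<Union>P"
      proof
        assume "X \<subseteq> B" then show ?thesis using X(2) B(1) by blast
      next
        assume "X \<in> P \<and> X \<noteq> B" then show ?thesis using X(2) by blast
      qed
    qed
    show "\<Union>P \<subseteq> \<Union>Q"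
    proof
      fix x assume "x \<in> \<Union>P"
      then obtain X where X: "X \<in> P" "x \<in> X" by (rule UnionE)
      show "x \<in> \<Union>Q"
      proof (cases "X = B")
        case False then show ?thesis using PQ[OF X(1)] X(2) by blast
      next
        case True
        show ?thesis
        proof (cases "x = i")
          case True then show ?thesis using BQ(2) by blast
        next
          case False then show ?thesis using BQ(1) X(2) \<open>X = B\<close> by blast
        qed
      qed
    qed
  qed
  moreover have "\<forall>X\<in>Q. \<forall>Y\<in>Q. X \<noteq> Y \<longrightarrow> X \<inter> Y = {}"
  proof (intro ballI impI)
    fix X Y assume X: "X \<in> Q" and Y: "Y \<in> Q" and ne: "X \<noteq> Y"
    from QB[OF X] show "X \<inter> Y = {}"
    proof
      assume XB: "X \<subseteq> B"
      from QB[OF Y] show ?thesis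
      proof
        assume YB: "Y \<subseteq> B"
        have "X = B - {i} \<or> X = {i}" using QQ[OF X] XB nsub[of X] by blast
        moreover have "Y = B - {i} \<or> Y = {i}" using QQ[OF Y] YB nsub[of Y] by blast
        ultimately show ?thesis using ne by (elim disjE) simp_all
      next
        assume "Y \<in> P \<and> Y \<noteq> B"
        then have "Y \<inter> B = {}" using dB by blast
        then show ?thesis using XB by blast
      qed
    next
      assume XP: "X \<in> P \<and> X \<noteq> B"
      then have XB: "X \<inter> B = {}" using dB by blast
      from QB[OF Y] show ?thesis
      proof
        assume YB: "Y \<subseteq> B"
        then show ?thesis using XB by blast
      next
        assume "Y \<in> P \<and> Y \<noteq> B"
        then show ?thesis using disj[of X Y] XP ne by blast
      qed
    qed
  qed
  moreover have "{} \<notin> Q"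
  proof
    assume "{} \<in> Q"
    then have "{} = B - {i} \<or> {} = {i} \<or> ({} \<in> P \<and> {} \<noteq> B)" by (rule QQ)
    moreover have "i + 1 \<in> B - {i}" using B(3) by simp
    ultimately show False using e by (elim disjE) (metis empty_iff, simp, simp)
  qed
  ultimately have QP: "partition_on {1..n} Q" unfolding part_def' using U by (intro conjI) simp_all
  define h where "h X = (if X = B - {i} \<or> X = {i} then B else X)" for X
  have hP: "h X \<in> P \<and> X \<subseteq> h X" if "X \<in> Q" for X
  proof (cases "X = B - {i} \<or> X = {i}")
    case True then show ?thesis using B unfolding h_def by auto
  next
    case False then show ?thesis using QQ[OF that] unfolding h_def by auto
  qed
  have "noncrossing Q" unfolding noncrossing_def
  proof (intro ballI impI notI)
    fix X Y assume X: "X \<in> Q" and Y: "Y \<in> Q" and ne: "X \<noteq> Y"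
    assume "\<exists>a b c d. a \<in> X \<and> b \<in> X \<and> c \<in> Y \<and> d \<in> Y \<and> a < c \<and> c < b \<and> b < d"
    then obtain a b c d where abcd: "a \<in> X" "b \<in> X" "c \<in> Y" "d \<in> Y" "a < c" "c < b" "b < d" by blast
    have "X \<noteq> {i}" using abcd by auto
    moreover have "Y \<noteq> {i}" using abcd by auto
    ultimately have hne: "h X \<noteq> h Y"
    proof (cases "X = B - {i}")
      case True
      then have "Y \<in> P" "Y \<noteq> B" "Y \<noteq> B - {i}" using QQ[OF Y] ne \<open>Y \<noteq> {i}\<close> by blast+
      then show ?thesis using True \<open>Y \<noteq> {i}\<close> unfolding h_def by simp
    next
      case False
      then have XX: "X \<in> P" "X \<noteq> B" using QQ[OF X] \<open>X \<noteq> {i}\<close> by blast+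
      show ?thesis
      proof (cases "Y = B - {i}")
        case True then show ?thesis using XX False \<open>X \<noteq> {i}\<close> unfolding h_def by simp
      next
        case F2: False
        then show ?thesis using False \<open>X \<noteq> {i}\<close> \<open>Y \<noteq> {i}\<close> ne unfolding h_def by simp
      qed
    qed
    have "\<not> (\<exists>a b c d. a \<in> h X \<and> b \<in> h X \<and> c \<in> h Y \<and> d \<in> h Y \<and> a < c \<and> c < b \<and> b < d)"
      using ncP[unfolded noncrossing_def, THEN bspec, OF hP[OF X, THEN conjunct1], THEN bspec, OF hP[OF Y, THEN conjunct1], THEN mp, OF hne] .
    moreover have "a \<in> h X" "b \<in> h X" "c \<in> h Y" "d \<in> h Y" using hP[OF X] hP[OF Y] abcd(1-4) by blast+
    ultimately show False using abcd(5-7) by blast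
  qed
  then show "nc_partition n (insert (B - {i}) (insert {i} (P - {B})))"
    using QP unfolding nc_partition_def Q_def[symmetric] by (intro conjI)
  have "(P - {B}) \<inter> {{i}, B - {i}} = {}" using n1 n2 by blast
  then have d1: "(P - {B}) - {{i}, B - {i}} = P - {B}" by (rule Diff_triv)
  have "insert (B - {i}) (insert {i} (P - {B})) - {{i}, B - {i}} = (P - {B}) - {{i}, B - {i}}"
    by blast
  then have "insert (B - {i}) (insert {i} (P - {B})) - {{i}, B - {i}} = P - {B}" using d1 by simp
  moreover have "insert i (B - {i}) = B" using B by blast
  ultimately show "insert (insert i (B - {i})) ((insert (B - {i}) (insert {i} (P - {B}))) - {{i}, B - {i}}) = P"
    using insert_Diff[OF B(1)] by simp
qed

lemma s_inv: "s i \<circ> s i = id"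
  unfolding s_def by (simp add: fun_eq_iff transpose_def)

theorem lemma7p4:
  fixes n i :: nat and \<sigma> :: "nat \<Rightarrow> nat"
  assumes "n \<ge> 2" and "\<sigma> \<in> NC n" and "1 \<le> i" and "i < n"
  shows "\<sigma> \<circ> s i \<in> NC n \<longleftrightarrow> i \<in> {\<sigma> i, \<sigma> (i + 1)}"
proof -
  obtain P where ncP: "nc_partition n P" and sig: "\<sigma> = part_perm n P"
    using assms(2) unfolding NC_def by blast
  have P: "partition_on {1..n} P" and ncr: "noncrossing P" using ncP unfolding nc_partition_def by simp_all
  have U: "\<Union>P = {1..n}" using P unfolding part_def' by blast
  have disj: "\<And>X Y. X \<in> P \<Longrightarrow> Y \<in> P \<Longrightarrow> X \<noteq> Y \<Longrightarrow> X \<inter> Y = {}" using P unfolding part_def' by blast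
  have "i \<in> \<Union>P" using U assms by simp
  then obtain Bi where Bi: "Bi \<in> P" "i \<in> Bi" by (rule UnionE)
  have "i + 1 \<in> \<Union>P" using U assms by simp
  then obtain C where C: "C \<in> P" "i + 1 \<in> C" by (rule UnionE)
  have si: "s i i = i + 1" "s i (i+1) = i" "\<And>y. y \<noteq> i \<Longrightarrow> y \<noteq> i + 1 \<Longrightarrow> s i y = y"
    unfolding s_def by simp_all
  show ?thesis
  proof
    assume "\<sigma> \<circ> s i \<in> NC n"
    then obtain Q where ncQ: "nc_partition n Q" and tau: "\<sigma> \<circ> s i = part_perm n Q"
      unfolding NC_def by auto
    have QP: "partition_on {1..n} Q" using ncQ unfolding nc_partition_def by simp
    have UQ: "\<Union>Q = {1..n}" using QP unfolding part_def' by blast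
    have tau': "part_perm n Q x = \<sigma> (s i x)" for x using tau by (metis comp_apply)
    show "i \<in> {\<sigma> i, \<sigma> (i + 1)}"
    proof (rule ccontr)
      assume "i \<notin> {\<sigma> i, \<sigma> (i + 1)}"
      then have a: "\<sigma> i \<noteq> i" "\<sigma> (i+1) \<noteq> i" by auto
      have BC: "Bi \<noteq> C"
      proof
        assume "Bi = C"
        then have "\<sigma> (i+1) = i" using pp_pred[OF P C(1)] Bi(2) C(2) sig by simp
        then show False using a by simp
      qed
      have iC: "i \<notin> C" using disj[OF Bi(1) C(1) BC] Bi(2) by blast
      have "i \<in> \<Union>Q" using UQ assms by simp
      then obtain D where D: "D \<in> Q" "i \<in> D" by (rule UnionE)
      have "part_perm n Q i \<in> D" using pp_in[OF QP D] .
      then have x0D: "part_perm n P (i+1) \<in> D" using tau' si sig by simp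
      have x0C: "part_perm n P (i+1) \<in> C" using pp_in[OF P C] .
      have "i + 1 \<in> D"
      proof (rule pp_closure[OF P C(1) x0C x0D C(2)])
        fix x assume xD: "x \<in> D" and xC: "x \<in> C" and xne: "x \<noteq> i + 1"
        have "x \<noteq> i" using xC iC by blast
        then have "part_perm n Q x = part_perm n P x" using tau' si(3)[OF _ xne] sig by simp
        then show "part_perm n P x \<in> D" using pp_in[OF QP D(1) xD] by simp
      qed
      then have "part_perm n Q (i+1) = i" using pp_pred[OF QP D(1) D(2)] by simp
      then have "\<sigma> i = i" using tau' si by simp
      then show False using a by simp
    qed
  next
    assume "i \<in> {\<sigma> i, \<sigma> (i + 1)}"
    then consider "\<sigma> i = i" | "\<sigma> (i+1) = i" by fastforce
    then show "\<sigma> \<circ> s i \<in> NC n"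
    proof cases
      case 1
      have "Bi = {i}" using pp_fix[OF P Bi] 1 sig by simp
      then have Si: "{i} \<in> P" using Bi by simp
      have "nc_partition n (insert (insert i C) (P - {{i}, C}))"
        unfolding nc_partition_def using merge_part[OF P Si C] merge_nc[OF P ncr Si C] by simp
      moreover have "part_perm n (insert (insert i C) (P - {{i}, C})) = \<sigma> \<circ> s i"
        using merge_pp[OF P Si C assms(3,4)] sig by simp
      ultimately show ?thesis unfolding NC_def mem_Collect_eq
        by (intro exI[of _ "insert (insert i C) (P - {{i}, C})"]) simp
    next
      case 2
      have iC: "i \<in> C" using pp_in[OF P C] 2 sig by simp
      define Q where "Q = insert (C - {i}) (insert {i} (P - {C}))"
      have ncQ: "nc_partition n Q" and bk: "insert (insert i (C - {i})) (Q - {{i}, C - {i}}) = P"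
        using split_part[OF P ncr C(1) iC C(2)] unfolding Q_def by simp_all
      have QP: "partition_on {1..n} Q" using ncQ unfolding nc_partition_def by simp
      have SiQ: "{i} \<in> Q" "C - {i} \<in> Q" "i + 1 \<in> C - {i}" using C(2) unfolding Q_def by simp_all
      have "part_perm n P = part_perm n Q \<circ> s i"
        using merge_pp[OF QP SiQ(1) SiQ(2) SiQ(3) assms(3,4)] bk by simp
      then have "\<sigma> \<circ> s i = part_perm n Q \<circ> (s i \<circ> s i)" using sig by (simp add: comp_assoc)
      then have "\<sigma> \<circ> s i = part_perm n Q" using s_inv by simp
      then show ?thesis using ncQ unfolding NC_def by blast
    qed
  qed
qed

end
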